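(* Let $\mathcal{B}$ be a spherical building of infinite thickness. Then there exists a chamber $C$ of $\mathcal{B}$ such that $\mathrm{Opp}(C)$ contains an apartment of $\mathcal{B}$.
   Context: A spherical building has infinite thickness if every codimension-one simplex (panel) is contained in infinitely many chambers. $\mathrm{Opp}(C)$ is the subcomplex of chambers opposite to $C$ (and their faces); two chambers are opposite if they lie on opposite sides of every wall in an apartment containing both. *)

theory Defs
  imports "HOL-Algebra.Algebra"
begin

text \<open>Buildings are treated via the W-metric approach (Abramenko--Brown, Ch. 5):
a building of type (W,S) is a set of chambers with a Weyl distance.\<close>

definition wprod :: "('w, 'm) monoid_scheme \<Rightarrow> 'w list \<Rightarrow> 'w" where
  "wprod G xs = foldr (\<lambda>s acc. s \<otimes>\<^bsub>G\<^esub> acc) xs \<one>\<^bsub>G\<^esub>"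

definition cox_len :: "('w, 'm) monoid_scheme \<Rightarrow> 'w set \<Rightarrow> 'w \<Rightarrow> nat" where
  "cox_len G S w = (LEAST n. \<exists>xs. set xs \<subseteq> S \<and> length xs = n \<and> wprod G xs = w)"

text \<open>Coxeter system, characterised by the exchange condition
(Abramenko--Brown, Thm 2.16 / Bourbaki).\<close>
definition coxeter_system :: "('w, 'm) monoid_scheme \<Rightarrow> 'w set \<Rightarrow> bool" where
  "coxeter_system G S \<longleftrightarrow>
     group G \<and> S \<subseteq> carrier G \<and> \<one>\<^bsub>G\<^esub> \<notin> S \<and>
     (\<forall>s\<in>S. s \<otimes>\<^bsub>G\<^esub> s = \<one>\<^bsub>G\<^esub>) \<and>
     generate G S = carrier G \<and>
     (\<forall>xs s. set xs \<subseteq> S \<longrightarrow> length xs = cox_len G S (wprod G xs) \<longrightarrow> s \<in> S \<longrightarrow>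
        cox_len G S (s \<otimes>\<^bsub>G\<^esub> wprod G xs) \<le> length xs \<longrightarrow>
        (\<exists>i < length xs. s \<otimes>\<^bsub>G\<^esub> wprod G xs = wprod G (take i xs @ drop (Suc i) xs)))"

text \<open>Building of type (W,S) with chamber set Ch and Weyl distance delta
(axioms WD1--WD3 of Abramenko--Brown, Def. 5.1).\<close>
definition w_building ::
  "('w, 'm) monoid_scheme \<Rightarrow> 'w set \<Rightarrow> 'c set \<Rightarrow> ('c \<Rightarrow> 'c \<Rightarrow> 'w) \<Rightarrow> bool" where
  "w_building G S Ch \<delta> \<longleftrightarrow>
     coxeter_system G S \<and>
     (\<forall>C\<in>Ch. \<forall>D\<in>Ch. \<delta> C D \<in> carrier G) \<and>
     (\<forall>C\<in>Ch. \<forall>D\<in>Ch. \<delta> C D = \<one>\<^bsub>G\<^esub> \<longleftrightarrow> C = D) \<and>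
     (\<forall>C\<in>Ch. \<forall>D\<in>Ch. \<forall>C'\<in>Ch. \<forall>s\<in>S. \<delta> C' C = s \<longrightarrow>
        (\<delta> C' D = s \<otimes>\<^bsub>G\<^esub> \<delta> C D \<or> \<delta> C' D = \<delta> C D) \<and>
        (cox_len G S (s \<otimes>\<^bsub>G\<^esub> \<delta> C D) = cox_len G S (\<delta> C D) + 1 \<longrightarrow>
           \<delta> C' D = s \<otimes>\<^bsub>G\<^esub> \<delta> C D)) \<and>
     (\<forall>C\<in>Ch. \<forall>D\<in>Ch. \<forall>s\<in>S. \<exists>C'\<in>Ch. \<delta> C' C = s \<and> \<delta> C' D = s \<otimes>\<^bsub>G\<^esub> \<delta> C D)"

definition spherical_building ::
  "('w, 'm) monoid_scheme \<Rightarrow> 'w set \<Rightarrow> 'c set \<Rightarrow> ('c \<Rightarrow> 'c \<Rightarrow> 'w) \<Rightarrow> bool" where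
  "spherical_building G S Ch \<delta> \<longleftrightarrow> w_building G S Ch \<delta> \<and> finite (carrier G)"

definition panel :: "'w set \<Rightarrow> 'c set \<Rightarrow> ('c \<Rightarrow> 'c \<Rightarrow> 'w) \<Rightarrow> 'c \<Rightarrow> 'w \<Rightarrow> 'c set" where
  "panel S Ch \<delta> C s = insert C {D \<in> Ch. \<delta> C D = s}"

definition infinitely_thick ::
  "'w set \<Rightarrow> 'c set \<Rightarrow> ('c \<Rightarrow> 'c \<Rightarrow> 'w) \<Rightarrow> bool" where
  "infinitely_thick S Ch \<delta> \<longleftrightarrow> (\<forall>C\<in>Ch. \<forall>s\<in>S. infinite (panel S Ch \<delta> C s))"

text \<open>In a spherical building, C and D are opposite iff delta(C,D) is the longest
element w0 of W, i.e. has maximal length.\<close>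
definition opposite ::
  "('w, 'm) monoid_scheme \<Rightarrow> 'w set \<Rightarrow> ('c \<Rightarrow> 'c \<Rightarrow> 'w) \<Rightarrow> 'c \<Rightarrow> 'c \<Rightarrow> bool" where
  "opposite G S \<delta> C D \<longleftrightarrow> (\<forall>w\<in>carrier G. cox_len G S w \<le> cox_len G S (\<delta> C D))"

text \<open>Apartments (complete system): images of W-isometries W \<rightarrow> Ch.\<close>
definition apartment ::
  "('w, 'm) monoid_scheme \<Rightarrow> 'c set \<Rightarrow> ('c \<Rightarrow> 'c \<Rightarrow> 'w) \<Rightarrow> 'c set \<Rightarrow> bool" where
  "apartment G Ch \<delta> A \<longleftrightarrow>
     (\<exists>\<alpha>. \<alpha> \<in> carrier G \<rightarrow> Ch \<and>
        (\<forall>w\<in>carrier G. \<forall>w'\<in>carrier G. \<delta> (\<alpha> w) (\<alpha> w') = inv\<^bsub>G\<^esub> w \<otimes>\<^bsub>G\<^esub> w') \<and>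
        A = \<alpha> ` carrier G)"

definition opp_contains ::
  "('w, 'm) monoid_scheme \<Rightarrow> 'w set \<Rightarrow> ('c \<Rightarrow> 'c \<Rightarrow> 'w) \<Rightarrow> 'c \<Rightarrow> 'c set \<Rightarrow> bool" where
  "opp_contains G S \<delta> C A \<longleftrightarrow> (\<forall>D\<in>A. opposite G S \<delta> C D)"

end

theory Submission
  imports Defs
begin


locale coxsys = group G for G :: "('w,'m) monoid_scheme" (structure) + fixes S :: "'w set"
  assumes cox: "coxeter_system G S"
begin


abbreviation l where "l \<equiv> cox_len G S"
abbreviation wp where "wp \<equiv> wprod G"

lemma S_sub: "S \<subseteq> carrier G" using cox unfolding coxeter_system_def by auto
lemma S_inv: "s \<in> S \<Longrightarrow> s \<otimes> s = \<one>" using cox unfolding coxeter_system_def by auto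
lemma S_ne1: "s \<in> S \<Longrightarrow> s \<noteq> \<one>" using cox unfolding coxeter_system_def by auto
lemma S_in[simp]: "s \<in> S \<Longrightarrow> s \<in> carrier G" using S_sub by auto
lemma S_invs: "s \<in> S \<Longrightarrow> inv s = s"
  using S_inv S_in by (simp add: inv_char)
lemma gen: "generate G S = carrier G" using cox unfolding coxeter_system_def by auto
lemma exch: "set xs \<subseteq> S \<Longrightarrow> length xs = l (wp xs) \<Longrightarrow> s \<in> S \<Longrightarrow>
        l (s \<otimes> wp xs) \<le> length xs \<Longrightarrow>
        (\<exists>i < length xs. s \<otimes> wp xs = wp (take i xs @ drop (Suc i) xs))"
  using cox unfolding coxeter_system_def by blast

lemma inv_cl[simp]: "u \<in> carrier G \<Longrightarrow> x \<in> carrier G \<Longrightarrow> inv u \<otimes> (u \<otimes> x) = x"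
  by (simp add: m_assoc[symmetric])
lemma inv_cl2[simp]: "u \<in> carrier G \<Longrightarrow> x \<in> carrier G \<Longrightarrow> u \<otimes> (inv u \<otimes> x) = x"
  by (simp add: m_assoc[symmetric])

lemma lcan: "a \<in> carrier G \<Longrightarrow> b \<in> carrier G \<Longrightarrow> c \<in> carrier G \<Longrightarrow> a \<otimes> b = a \<otimes> c \<Longrightarrow> b = c"
  by (metis inv_cl)
lemma rcan: "a \<in> carrier G \<Longrightarrow> b \<in> carrier G \<Longrightarrow> c \<in> carrier G \<Longrightarrow> b \<otimes> a = c \<otimes> a \<Longrightarrow> b = c"
  by simp

lemma wp_Nil[simp]: "wp [] = \<one>" by (simp add: wprod_def)
lemma wp_Cons[simp]: "wp (s # xs) = s \<otimes> wp xs" by (simp add: wprod_def)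
lemma wp_in: "set xs \<subseteq> S \<Longrightarrow> wp xs \<in> carrier G"
  by (induction xs) (auto intro: S_in)
lemma wp_append: "set xs \<subseteq> S \<Longrightarrow> set ys \<subseteq> S \<Longrightarrow> wp (xs @ ys) = wp xs \<otimes> wp ys"
  by (induction xs) (auto simp: m_assoc wp_in S_in)
lemma wp_single[simp]: "s \<in> S \<Longrightarrow> wp [s] = s" by (simp add: S_in)

lemma wp_rev: "set xs \<subseteq> S \<Longrightarrow> inv (wp xs) = wp (rev xs)"
proof (induction xs)
  case Nil then show ?case by simp
next
  case (Cons s xs)
  then have "inv (wp (s#xs)) = inv (wp xs) \<otimes> inv s"
    by (simp add: inv_mult_group S_in wp_in)
  also have "\<dots> = wp (rev xs) \<otimes> s" using Cons by (simp add: S_invs)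
  also have "\<dots> = wp (rev (s#xs))" using Cons.prems by (simp add: wp_append S_in[of s])
  finally show ?case .
qed

lemma has_word: "w \<in> carrier G \<Longrightarrow> \<exists>xs. set xs \<subseteq> S \<and> wp xs = w"
proof -
  assume "w \<in> carrier G"
  then have "w \<in> generate G S" using gen by simp
  then show ?thesis
  proof (induction rule: generate.induct)
    case one then show ?case by (intro exI[of _ "[]"]) simp
  next
    case (incl h) then show ?case by (intro exI[of _ "[h]"]) (simp add: S_in)
  next
    case (inv h) then show ?case by (intro exI[of _ "[h]"]) (simp add: S_invs S_in)
  next
    case (eng h1 h2)
    then obtain xs ys where "set xs \<subseteq> S" "wp xs = h1" "set ys \<subseteq> S" "wp ys = h2" by blast
    then show ?case by (intro exI[of _ "xs@ys"]) (simp add: wp_append)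
  qed
qed

lemma l_le: "set xs \<subseteq> S \<Longrightarrow> l (wp xs) \<le> length xs"
  unfolding cox_len_def by (rule Least_le) blast

lemma l_word: "w \<in> carrier G \<Longrightarrow> \<exists>xs. set xs \<subseteq> S \<and> wp xs = w \<and> length xs = l w"
proof -
  assume "w \<in> carrier G"
  then obtain ys where "set ys \<subseteq> S" "wp ys = w" using has_word by blast
  then have "\<exists>n. \<exists>xs. set xs \<subseteq> S \<and> length xs = n \<and> wp xs = w" by blast
  from LeastI_ex[OF this] show ?thesis unfolding cox_len_def by blast
qed

lemma l_one[simp]: "l \<one> = 0"
  using l_le[of "[]"] by simp

lemma l_S: "s \<in> S \<Longrightarrow> l s = 1"
proof -
  assume s: "s \<in> S"
  have "l s \<le> 1" using l_le[of "[s]"] s by simp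
  moreover have "l s \<noteq> 0"
  proof
    assume "l s = 0"
    then obtain xs where "set xs \<subseteq> S" "wp xs = s" "length xs = 0" using l_word[OF S_in[OF s]] by auto
    then show False using S_ne1[OF s] by simp
  qed
  ultimately show ?thesis by simp
qed

lemma l_0: "w \<in> carrier G \<Longrightarrow> l w = 0 \<Longrightarrow> w = \<one>"
  using l_word by fastforce

lemma l_mult: "a \<in> carrier G \<Longrightarrow> b \<in> carrier G \<Longrightarrow> l (a \<otimes> b) \<le> l a + l b"
proof -
  assume a: "a \<in> carrier G" and b: "b \<in> carrier G"
  obtain xs where xs: "set xs \<subseteq> S" "wp xs = a" "length xs = l a" using l_word[OF a] by blast
  obtain ys where ys: "set ys \<subseteq> S" "wp ys = b" "length ys = l b" using l_word[OF b] by blast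
  have "l (wp (xs@ys)) \<le> length (xs@ys)" using xs ys by (intro l_le) auto
  then show ?thesis using xs ys by (simp add: wp_append)
qed

lemma len_inv: "w \<in> carrier G \<Longrightarrow> l (inv w) = l w"
proof -
  have *: "l (inv w) \<le> l w" if w: "w \<in> carrier G" for w
  proof -
    obtain xs where xs: "set xs \<subseteq> S" "wp xs = w" "length xs = l w" using l_word[OF w] by blast
    have "l (wp (rev xs)) \<le> length (rev xs)" using xs by (intro l_le) auto
    then show ?thesis using xs wp_rev[OF xs(1)] by simp
  qed
  assume "w \<in> carrier G" then show ?thesis using *[of w] *[of "inv w"] by simp
qed

lemma l_sw_le: "s \<in> S \<Longrightarrow> w \<in> carrier G \<Longrightarrow> l (s \<otimes> w) \<le> l w + 1"
  using l_mult[of s w] l_S S_in by fastforce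

lemma l_ws_le: "s \<in> S \<Longrightarrow> w \<in> carrier G \<Longrightarrow> l (w \<otimes> s) \<le> l w + 1"
  using l_mult[of w s] l_S S_in by fastforce

lemma ss_cancel: "s \<in> S \<Longrightarrow> w \<in> carrier G \<Longrightarrow> s \<otimes> (s \<otimes> w) = w"
  by (simp add: m_assoc[symmetric] S_inv S_in)

lemma ss_cancel_r: "s \<in> S \<Longrightarrow> w \<in> carrier G \<Longrightarrow> (w \<otimes> s) \<otimes> s = w"
  by (simp add: m_assoc S_inv S_in)

lemma l_sw_ge: "s \<in> S \<Longrightarrow> w \<in> carrier G \<Longrightarrow> l w \<le> l (s \<otimes> w) + 1"
  using l_sw_le[of s "s \<otimes> w"] ss_cancel S_in by simp

lemma l_ws_ge: "s \<in> S \<Longrightarrow> w \<in> carrier G \<Longrightarrow> l w \<le> l (w \<otimes> s) + 1"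
  using l_ws_le[of s "w \<otimes> s"] ss_cancel_r S_in by simp

lemma del_sub: "set xs \<subseteq> S \<Longrightarrow> set (take i xs @ drop j xs) \<subseteq> S"
  using set_take_subset[of i xs] set_drop_subset[of j xs] by auto

lemma l_sw_neq: "s \<in> S \<Longrightarrow> w \<in> carrier G \<Longrightarrow> l (s \<otimes> w) \<noteq> l w"
proof
  assume s: "s \<in> S" and w: "w \<in> carrier G" and eq: "l (s \<otimes> w) = l w"
  obtain xs where xs: "set xs \<subseteq> S" "wp xs = w" "length xs = l w" using l_word[OF w] by blast
  then obtain i where i: "i < length xs" "s \<otimes> w = wp (take i xs @ drop (Suc i) xs)"
    using exch[of xs s] s eq by auto
  have "set (take i xs @ drop (Suc i) xs) \<subseteq> S" using xs(1) by (rule del_sub)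
  then have "l (s \<otimes> w) \<le> length (take i xs @ drop (Suc i) xs)" using i l_le by metis
  also have "\<dots> < length xs" using i by simp
  finally show False using eq xs by simp
qed

lemma l_sw: "s \<in> S \<Longrightarrow> w \<in> carrier G \<Longrightarrow> l (s \<otimes> w) = l w + 1 \<or> l (s \<otimes> w) + 1 = l w"
  using l_sw_neq l_sw_le l_sw_ge by fastforce

lemma l_ws: "s \<in> S \<Longrightarrow> w \<in> carrier G \<Longrightarrow> l (w \<otimes> s) = l w + 1 \<or> l (w \<otimes> s) + 1 = l w"
proof -
  assume s: "s \<in> S" and w: "w \<in> carrier G"
  have "inv (w \<otimes> s) = s \<otimes> inv w" using s w by (simp add: inv_mult_group S_in S_invs)
  then have "l (w \<otimes> s) = l (s \<otimes> inv w)" using len_inv[of "w \<otimes> s"] s w S_in by simp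
  then show ?thesis using l_sw[of s "inv w"] s w len_inv by simp
qed

lemma KP0:
  assumes s: "s \<in> S" and r: "r \<in> S" and w: "w \<in> carrier G"
    and a: "l w < l (s \<otimes> w)" and b: "l (s \<otimes> (w \<otimes> r)) < l (w \<otimes> r)"
  shows "w \<otimes> r = s \<otimes> w"
proof (cases "l (w \<otimes> r) = l w + 1")
  case True
  obtain xs where xs: "set xs \<subseteq> S" "wp xs = w" "length xs = l w" using l_word[OF w] by blast
  let ?ys = "xs @ [r]"
  have ys: "set ?ys \<subseteq> S" "wp ?ys = w \<otimes> r" "length ?ys = l (wp ?ys)"
    using xs r True by (auto simp: wp_append)
  then obtain i where i: "i < length ?ys" "s \<otimes> wp ?ys = wp (take i ?ys @ drop (Suc i) ?ys)"
    using exch[of ?ys s] s b by fastforce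
  show ?thesis
  proof (cases "i = length xs")
    case True
    then have "s \<otimes> (w \<otimes> r) = w" using i ys xs by simp
    then have "s \<otimes> (s \<otimes> (w \<otimes> r)) = s \<otimes> w" by simp
    then show ?thesis using s r w by (simp add: ss_cancel)
  next
    case False
    then have il: "i < length xs" using i by simp
    let ?d = "take i xs @ drop (Suc i) xs"
    have d: "set ?d \<subseteq> S" using xs(1) by (rule del_sub)
    have "s \<otimes> (w \<otimes> r) = wp (?d @ [r])" using i il ys by simp
    also have "\<dots> = wp ?d \<otimes> wp [r]" using d r by (intro wp_append) auto
    also have "\<dots> = wp ?d \<otimes> r" using r by simp
    finally have "(s \<otimes> w) \<otimes> r = wp ?d \<otimes> r" using s w r by (simp add: m_assoc)
    then have "s \<otimes> w = wp ?d" using s w r d wp_in by (simp add: r_cancel)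
    then have "l (s \<otimes> w) \<le> length ?d" using l_le[OF d] by simp
    then show ?thesis using a il xs by simp
  qed
next
  case False
  then have "l (w \<otimes> r) + 1 = l w" using l_ws[OF r w] by simp
  moreover have "l (s \<otimes> w) \<le> l (s \<otimes> (w \<otimes> r)) + 1"
    using l_ws_ge[of r "s \<otimes> w"] r s w by (simp add: m_assoc)
  ultimately show ?thesis using a b by simp
qed

definition refl :: "'w \<Rightarrow> 'w \<Rightarrow> 'w" where "refl u s = u \<otimes> s \<otimes> inv u"
definition half :: "'w \<Rightarrow> 'w \<Rightarrow> 'w set" where
  "half u s = {w \<in> carrier G. l (inv u \<otimes> w) < l (s \<otimes> (inv u \<otimes> w))}"

lemma refl_in: "u \<in> carrier G \<Longrightarrow> s \<in> S \<Longrightarrow> refl u s \<in> carrier G"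
  by (simp add: refl_def)

lemma refl_inv: "u \<in> carrier G \<Longrightarrow> s \<in> S \<Longrightarrow> refl u s \<otimes> refl u s = \<one>"
proof -
  assume u: "u \<in> carrier G" and s: "s \<in> S"
  have "refl u s \<otimes> refl u s = u \<otimes> (s \<otimes> (inv u \<otimes> u) \<otimes> s) \<otimes> inv u"
    using u s by (simp add: refl_def m_assoc)
  also have "\<dots> = \<one>" using u s by (simp add: S_inv)
  finally show ?thesis .
qed

lemma refl_conj: "u \<in> carrier G \<Longrightarrow> s \<in> S \<Longrightarrow> w \<in> carrier G \<Longrightarrow>
   inv u \<otimes> (refl u s \<otimes> w) = s \<otimes> (inv u \<otimes> w)"
  by (simp add: refl_def m_assoc)

lemma F1: assumes u: "u \<in> carrier G" and s: "s \<in> S" and w: "w \<in> carrier G"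
  shows "(refl u s \<otimes> w \<in> half u s) \<longleftrightarrow> w \<notin> half u s"
proof -
  let ?v = "inv u \<otimes> w"
  have v: "?v \<in> carrier G" using u w by simp
  have e: "s \<otimes> (inv u \<otimes> (refl u s \<otimes> w)) = ?v" using refl_conj[OF u s w] s v by (simp add: ss_cancel)
  show ?thesis unfolding half_def using refl_conj[OF u s w] e l_sw_neq[OF s v] u w s refl_in
    by auto
qed

lemma F2: assumes u: "u \<in> carrier G" and s: "s \<in> S" and w: "w \<in> carrier G" and r: "r \<in> S"
  and d: "(w \<in> half u s) \<noteq> (w \<otimes> r \<in> half u s)"
  shows "w \<otimes> r = refl u s \<otimes> w"
proof -
  have main: "w' \<otimes> r = refl u s \<otimes> w'" if w': "w' \<in> carrier G" "w' \<in> half u s" "w' \<otimes> r \<notin> half u s" for w'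
  proof -
    let ?v = "inv u \<otimes> w'"
    have v: "?v \<in> carrier G" using u w' by simp
    have a: "l ?v < l (s \<otimes> ?v)" using w' unfolding half_def by auto
    have "\<not> l (inv u \<otimes> (w' \<otimes> r)) < l (s \<otimes> (inv u \<otimes> (w' \<otimes> r)))" using w' r unfolding half_def by auto
    then have "l (s \<otimes> (?v \<otimes> r)) < l (?v \<otimes> r)"
      using l_sw_neq[of s "?v \<otimes> r"] s r v u w' by (simp add: m_assoc)
    then have "?v \<otimes> r = s \<otimes> ?v" using KP0[OF s r v a] by simp
    then have "u \<otimes> (?v \<otimes> r) = u \<otimes> (s \<otimes> ?v)" by simp
    then show ?thesis using u s w' r by (simp add: refl_def m_assoc[symmetric])
  qed
  show ?thesis
  proof (cases "w \<in> half u s")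
    case True then show ?thesis using main[OF w] d by simp
  next
    case False
    have wr: "w \<otimes> r \<in> carrier G" using w r by simp
    have "(w \<otimes> r) \<otimes> r = refl u s \<otimes> (w \<otimes> r)" using main[OF wr] d False w r by (simp add: ss_cancel_r)
    then have "w = refl u s \<otimes> (w \<otimes> r)" using w r by (simp add: ss_cancel_r)
    then have "refl u s \<otimes> w = (refl u s \<otimes> refl u s) \<otimes> (w \<otimes> r)" using w r u s refl_in by (simp add: m_assoc)
    then show ?thesis using refl_inv[OF u s] w r by simp
  qed
qed

lemma path_cross: assumes u: "u \<in> carrier G" and s: "s \<in> S"
  shows "set xs \<subseteq> S \<Longrightarrow> a \<in> carrier G \<Longrightarrow> (a \<in> half u s) \<noteq> (a \<otimes> wp xs \<in> half u s) \<Longrightarrow>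
    \<exists>i < length xs. a \<otimes> wp (take (Suc i) xs) = refl u s \<otimes> (a \<otimes> wp (take i xs))"
proof (induction xs arbitrary: a)
  case Nil then show ?case by simp
next
  case (Cons r ys)
  show ?case
  proof (cases "(a \<in> half u s) = (a \<otimes> r \<in> half u s)")
    case False
    then have "a \<otimes> r = refl u s \<otimes> a" using F2[OF u s Cons.prems(2), of r] Cons.prems by simp
    then show ?thesis using Cons.prems by (intro exI[of _ 0]) simp
  next
    case True
    then have "(a \<otimes> r \<in> half u s) \<noteq> ((a \<otimes> r) \<otimes> wp ys \<in> half u s)"
      using Cons.prems by (simp add: m_assoc wp_in)
    then obtain i where "i < length ys" "(a \<otimes> r) \<otimes> wp (take (Suc i) ys) = refl u s \<otimes> ((a \<otimes> r) \<otimes> wp (take i ys))"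
      using Cons.IH[of "a \<otimes> r"] Cons.prems by auto
    then show ?thesis using Cons.prems
      by (intro exI[of _ "Suc i"]) (simp add: m_assoc wp_in[OF subset_trans[OF set_take_subset]])
  qed
qed

lemma take_drop_wp: "set xs \<subseteq> S \<Longrightarrow> wp xs = wp (take i xs) \<otimes> wp (drop i xs)"
  using wp_append[of "take i xs" "drop i xs"] set_take_subset[of i xs] set_drop_subset[of i xs] by simp

lemma cross_del: assumes u: "u \<in> carrier G" and s: "s \<in> S" and xs: "set xs \<subseteq> S"
  and a: "a \<in> carrier G" and d: "(a \<in> half u s) \<noteq> (a \<otimes> wp xs \<in> half u s)"
  shows "\<exists>i < length xs. refl u s \<otimes> (a \<otimes> wp xs) = a \<otimes> wp (take i xs @ drop (Suc i) xs)"
proof -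
  obtain i where i: "i < length xs" "a \<otimes> wp (take (Suc i) xs) = refl u s \<otimes> (a \<otimes> wp (take i xs))"
    using path_cross[OF u s xs a d] by blast
  have tS: "set (take j xs) \<subseteq> S" "set (drop j xs) \<subseteq> S" for j
    using xs set_take_subset[of j xs] set_drop_subset[of j xs] by auto
  have "refl u s \<otimes> (a \<otimes> wp xs) = refl u s \<otimes> ((a \<otimes> wp (take (Suc i) xs)) \<otimes> wp (drop (Suc i) xs))"
    using take_drop_wp[OF xs, of "Suc i"] a xs tS wp_in by (simp add: m_assoc)
  also have "\<dots> = (refl u s \<otimes> refl u s) \<otimes> (a \<otimes> wp (take i xs)) \<otimes> wp (drop (Suc i) xs)"
    using i(2) a tS wp_in refl_in u s by (simp add: m_assoc)
  also have "\<dots> = a \<otimes> wp (take i xs @ drop (Suc i) xs)"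
    using refl_inv[OF u s] a tS wp_in by (simp add: m_assoc wp_append)
  finally show ?thesis using i by blast
qed

lemma SE: assumes u: "u \<in> carrier G" and s: "s \<in> S" and w: "w \<in> carrier G"
  and le: "l (refl u s \<otimes> w) \<le> l w" and xs: "set xs \<subseteq> S" "wp xs = w"
  shows "\<exists>i < length xs. refl u s \<otimes> w = wp (take i xs @ drop (Suc i) xs)"
proof -
  have d: "(\<one> \<in> half u s) \<noteq> (w \<in> half u s)"
  proof
    assume eq: "(\<one> \<in> half u s) = (w \<in> half u s)"
    let ?tw = "refl u s \<otimes> w"
    have tw: "?tw \<in> carrier G" using u s w refl_in by simp
    obtain ys where ys: "set ys \<subseteq> S" "wp ys = ?tw" "length ys = l ?tw" using l_word[OF tw] by blast
    have "(?tw \<in> half u s) = (w \<notin> half u s)" by (rule F1[OF u s w])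
    then have "(\<one> \<in> half u s) \<noteq> (\<one> \<otimes> wp ys \<in> half u s)" using eq ys(2) tw by simp
    then obtain i where i: "i < length ys" "refl u s \<otimes> (\<one> \<otimes> wp ys) = \<one> \<otimes> wp (take i ys @ drop (Suc i) ys)"
      using cross_del[OF u s ys(1) one_closed] by blast
    have dS: "wp (take i ys @ drop (Suc i) ys) \<in> carrier G" using wp_in[OF del_sub[OF ys(1)]] .
    have "refl u s \<otimes> ?tw = w" using refl_inv[OF u s] w u s refl_in by (simp add: m_assoc[symmetric])
    moreover have "refl u s \<otimes> ?tw = wp (take i ys @ drop (Suc i) ys)"
      using i(2) ys(2) tw dS by simp
    ultimately have "w = wp (take i ys @ drop (Suc i) ys)" by simp
    then have "l w \<le> length ys - 1" using l_le[OF del_sub[OF ys(1)], of i "Suc i"] i by simp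
    then show False using le ys i by simp
  qed
  obtain i where "i < length xs" "refl u s \<otimes> (\<one> \<otimes> wp xs) = \<one> \<otimes> wp (take i xs @ drop (Suc i) xs)"
    using cross_del[OF u s xs(1) one_closed] d xs(2) w by auto
  then show ?thesis using xs w wp_in[OF del_sub[OF xs(1)]] by auto
qed

lemma last_letter: assumes x: "x \<in> carrier G" and n: "l x = Suc n"
  shows "\<exists>bs s. set bs \<subseteq> S \<and> s \<in> S \<and> x = wp bs \<otimes> s \<and> length bs = n \<and> l (wp bs) = n"
proof -
  obtain xs where xs: "set xs \<subseteq> S" "wp xs = x" "length xs = l x" using l_word[OF x] by blast
  then have "xs \<noteq> []" using n by auto
  then obtain bs s where bs: "xs = bs @ [s]" using rev_exhaust by blast
  have bS: "set bs \<subseteq> S" "s \<in> S" using xs bs by auto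
  have xe: "x = wp bs \<otimes> s" using xs bs bS by (simp add: wp_append)
  have "length bs = n" using xs bs n by simp
  moreover have "l (wp bs) \<le> n" using l_le[OF bS(1)] calculation by simp
  moreover have "l x \<le> l (wp bs) + 1" using xe l_ws_le[OF bS(2) wp_in[OF bS(1)]] by simp
  ultimately show ?thesis using bS xe n by (intro exI[of _ bs] exI[of _ s]) simp
qed

lemma prefix_w0: assumes w0: "w0 \<in> carrier G" and mx: "\<forall>w\<in>carrier G. l w \<le> l w0"
  shows "x \<in> carrier G \<Longrightarrow> l (inv x \<otimes> w0) + l x = l w0"
proof (induction "l x" arbitrary: x)
  case 0
  then have "x = \<one>" using l_0 by simp
  then show ?case using w0 by simp
next
  case (Suc n x)
  obtain bs s where bs: "set bs \<subseteq> S" "s \<in> S" "x = wp bs \<otimes> s" "length bs = n" "l (wp bs) = n"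
    using last_letter[OF Suc.prems Suc.hyps(2)[symmetric]] by blast
  let ?x' = "wp bs"
  have x': "?x' \<in> carrier G" using wp_in[OF bs(1)] .
  let ?y' = "inv ?x' \<otimes> w0"
  have y': "?y' \<in> carrier G" using x' w0 by simp
  have IH: "l ?y' + n = l w0" using Suc.hyps(1)[of ?x'] x' bs by simp
  have ye: "inv x \<otimes> w0 = s \<otimes> ?y'" using bs x' w0 by (simp add: inv_mult_group S_invs m_assoc)
  have lb: "l w0 \<le> l x + l (inv x \<otimes> w0)"
    using l_mult[of x "inv x \<otimes> w0"] Suc.prems w0 by simp
  show ?case
  proof (cases "l (s \<otimes> ?y') + 1 = l ?y'")
    case True then show ?thesis using ye IH Suc.hyps(2) by simp
  next
    case False
    then have up: "l (s \<otimes> ?y') = l ?y' + 1" using l_sw[OF bs(2) y'] by simp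
    obtain cs where cs: "set cs \<subseteq> S" "wp cs = ?y'" "length cs = l ?y'" using l_word[OF y'] by blast
    have bc: "set (bs @ cs) \<subseteq> S" "wp (bs @ cs) = w0" using bs cs x' w0 by (auto simp: wp_append m_assoc[symmetric])
    let ?t = "refl ?x' s"
    have tw: "?t \<otimes> w0 = ?x' \<otimes> (s \<otimes> ?y')" using x' bs w0 by (simp add: refl_def m_assoc)
    have "l (?t \<otimes> w0) \<le> l w0" using mx refl_in[OF x' bs(2)] w0 by simp
    then obtain i where i: "i < length (bs @ cs)" "?t \<otimes> w0 = wp (take i (bs@cs) @ drop (Suc i) (bs@cs))"
      using SE[OF x' bs(2) w0 _ bc] by blast
    show ?thesis
    proof (cases "i < length bs")
      case True
      let ?d = "take i bs @ drop (Suc i) bs"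
      have dS: "set ?d \<subseteq> S" using del_sub[OF bs(1)] .
      have eqd: "take i (bs@cs) @ drop (Suc i) (bs@cs) = ?d @ cs" using True by simp
      have "?x' \<otimes> (s \<otimes> ?y') = ?t \<otimes> w0" using tw by simp
      also have "\<dots> = wp (?d @ cs)" by (simp only: i(2) eqd)
      also have "\<dots> = wp ?d \<otimes> ?y'" by (simp only: wp_append[OF dS cs(1)] cs(2))
      finally have e: "?x' \<otimes> (s \<otimes> ?y') = wp ?d \<otimes> ?y'" .
      have "(?x' \<otimes> s) \<otimes> ?y' = wp ?d \<otimes> ?y'" using e m_assoc[OF x' S_in[OF bs(2)] y'] by simp
      then have "?x' \<otimes> s = wp ?d" by (rule rcan[OF y' m_closed[OF x' S_in[OF bs(2)]] wp_in[OF dS]])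
      then have "l x \<le> length ?d" using l_le[OF dS] bs(3) by simp
      then show ?thesis using True bs Suc.hyps(2) by simp
    next
      case False
      define j where "j = i - length bs"
      let ?d = "take j cs @ drop (Suc j) cs"
      have dS: "set ?d \<subseteq> S" using del_sub[OF cs(1)] .
      have jl: "j < length cs" using i False j_def by simp
      have eqd: "take i (bs@cs) @ drop (Suc i) (bs@cs) = bs @ ?d" using False j_def
        by (simp add: Suc_diff_le)
      have "?x' \<otimes> (s \<otimes> ?y') = ?t \<otimes> w0" using tw by simp
      also have "\<dots> = wp (bs @ ?d)" by (simp only: i(2) eqd)
      also have "\<dots> = ?x' \<otimes> wp ?d" by (simp only: wp_append[OF bs(1) dS])
      finally have "?x' \<otimes> (s \<otimes> ?y') = ?x' \<otimes> wp ?d" .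
      then have "s \<otimes> ?y' = wp ?d" by (rule lcan[OF x' m_closed[OF S_in[OF bs(2)] y'] wp_in[OF dS]])
      then have "l (s \<otimes> ?y') \<le> length ?d" using l_le[OF dS] by simp
      then show ?thesis using up jl cs by simp
    qed
  qed
qed

lemma ascent: assumes w0: "w0 \<in> carrier G" and mx: "\<forall>w\<in>carrier G. l w \<le> l w0"
  and z: "z \<in> carrier G" and lt: "l z < l w0"
  shows "\<exists>s\<in>S. l (s \<otimes> z) = l z + 1"
proof -
  have w0': "inv w0 \<in> carrier G" using w0 by simp
  have mx': "\<forall>w\<in>carrier G. l w \<le> l (inv w0)" using mx len_inv[OF w0] by simp
  have "l (inv (inv z) \<otimes> inv w0) + l (inv z) = l (inv w0)" using prefix_w0[OF w0' mx', of "inv z"] z by simp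
  then have e1: "l (z \<otimes> inv w0) + l z = l w0" using z w0 len_inv by simp
  let ?y = "w0 \<otimes> inv z"
  have y: "?y \<in> carrier G" using w0 z by simp
  have "inv (z \<otimes> inv w0) = ?y" using z w0 by (simp add: inv_mult_group)
  then have ly: "l ?y + l z = l w0" using e1 len_inv[of "z \<otimes> inv w0"] z w0 by simp
  then obtain n where "l ?y = Suc n" using lt by (cases "l ?y") auto
  then obtain bs s where bs: "set bs \<subseteq> S" "s \<in> S" "?y = wp bs \<otimes> s" "l (wp bs) = n"
    using last_letter[OF y] by blast
  have "w0 = ?y \<otimes> z" using w0 z by (simp add: m_assoc)
  also have "\<dots> = wp bs \<otimes> (s \<otimes> z)" using bs z wp_in by (simp add: m_assoc)
  finally have "l w0 \<le> n + l (s \<otimes> z)" using l_mult[of "wp bs" "s \<otimes> z"] bs z wp_in by simp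
  then show ?thesis using l_sw[OF bs(2) z] ly \<open>l ?y = Suc n\<close> bs by (intro bexI[of _ s]) auto
qed

end



locale bld = coxsys + fixes Ch :: "'c set" and \<delta>
  assumes wb: "w_building G S Ch \<delta>"
begin

lemma dC: "C \<in> Ch \<Longrightarrow> D \<in> Ch \<Longrightarrow> \<delta> C D \<in> carrier G"
  using wb unfolding w_building_def by blast
lemma d1: "C \<in> Ch \<Longrightarrow> D \<in> Ch \<Longrightarrow> \<delta> C D = \<one> \<longleftrightarrow> C = D"
  using wb unfolding w_building_def by blast
lemma dCC[simp]: "C \<in> Ch \<Longrightarrow> \<delta> C C = \<one>" using d1 by blast
lemma WD2a: "C \<in> Ch \<Longrightarrow> D \<in> Ch \<Longrightarrow> C' \<in> Ch \<Longrightarrow> s \<in> S \<Longrightarrow> \<delta> C' C = s \<Longrightarrow>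
   \<delta> C' D = s \<otimes> \<delta> C D \<or> \<delta> C' D = \<delta> C D"
  using wb unfolding w_building_def by blast
lemma WD2b: "C \<in> Ch \<Longrightarrow> D \<in> Ch \<Longrightarrow> C' \<in> Ch \<Longrightarrow> s \<in> S \<Longrightarrow> \<delta> C' C = s \<Longrightarrow>
   l (s \<otimes> \<delta> C D) = l (\<delta> C D) + 1 \<Longrightarrow> \<delta> C' D = s \<otimes> \<delta> C D"
  using wb unfolding w_building_def by blast
lemma WD3: "C \<in> Ch \<Longrightarrow> D \<in> Ch \<Longrightarrow> s \<in> S \<Longrightarrow> \<exists>C'\<in>Ch. \<delta> C' C = s \<and> \<delta> C' D = s \<otimes> \<delta> C D"
  using wb unfolding w_building_def by blast

lemma sym_adj: assumes C: "C \<in> Ch" and C': "C' \<in> Ch" and s: "s \<in> S" and e: "\<delta> C C' = s"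
  shows "\<delta> C' C = s"
proof -
  have dc: "\<delta> C' C \<in> carrier G" using dC C C' by simp
  from WD2a[OF C' C C s e] have "\<one> = s \<otimes> \<delta> C' C \<or> \<one> = \<delta> C' C" using C by simp
  then show ?thesis
  proof
    assume "\<one> = \<delta> C' C" then have "C' = C" using d1 C C' by metis
    then show ?thesis using e C S_ne1[OF s] by simp
  next
    assume h: "\<one> = s \<otimes> \<delta> C' C"
    have "s \<otimes> s = s \<otimes> \<delta> C' C" using h S_inv[OF s] by simp
    then show ?thesis using lcan[OF S_in[OF s] S_in[OF s] dc] by simp
  qed
qed

lemma panel_adj: assumes P: "P \<in> Ch" and Q: "Q \<in> Ch" and C: "C \<in> Ch" and s: "s \<in> S"
  and a: "\<delta> P C = s" and b: "\<delta> Q C = s" and ne: "P \<noteq> Q"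
  shows "\<delta> P Q = s"
proof -
  have cy: "\<delta> C Q = s" using sym_adj[OF Q C s b] .
  have "\<delta> P Q = s \<otimes> s \<or> \<delta> P Q = s" using WD2a[OF C Q P s a] cy by simp
  then show ?thesis using S_inv[OF s] d1[OF P Q] ne by auto
qed

definition gal :: "(nat \<Rightarrow> 'c) \<Rightarrow> 'a list \<Rightarrow> bool" where
  "gal g xs \<longleftrightarrow> (\<forall>i \<le> length xs. g i \<in> Ch) \<and> (\<forall>i < length xs. \<delta> (g i) (g (Suc i)) = xs ! i)"

definition red :: "'a list \<Rightarrow> bool" where
  "red xs \<longleftrightarrow> set xs \<subseteq> S \<and> l (wp xs) = length xs"

lemma red_append: assumes "red (xs @ ys)" shows "red xs" "red ys"
proof -
  have S: "set xs \<subseteq> S" "set ys \<subseteq> S" using assms unfolding red_def by auto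
  have "l (wp (xs@ys)) \<le> l (wp xs) + l (wp ys)" using wp_append[OF S] l_mult wp_in S by simp
  moreover have "l (wp xs) \<le> length xs" "l (wp ys) \<le> length ys" using l_le S by auto
  ultimately show "red xs" "red ys" using assms S unfolding red_def by auto
qed

lemma red_Cons: "red (s # xs) \<Longrightarrow> red xs"
  using red_append[of "[s]" xs] by simp

lemma all_le_Suc: "(\<forall>i \<le> Suc n. Q i) \<longleftrightarrow> Q 0 \<and> (\<forall>i \<le> n. Q (Suc i))"
  apply auto
  apply (case_tac i)
   apply auto
  done

lemma all_less_Suc: "(\<forall>i < Suc n. Q i) \<longleftrightarrow> Q 0 \<and> (\<forall>i < n. Q (Suc i))"
  apply auto
  apply (case_tac i)
   apply auto
  done

lemma gal_Cons: "gal g (s # xs) \<longleftrightarrow> g 0 \<in> Ch \<and> \<delta> (g 0) (g 1) = s \<and> gal (\<lambda>i. g (Suc i)) xs"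
  unfolding gal_def length_Cons all_le_Suc all_less_Suc by auto

lemma LemR: "red xs \<Longrightarrow> gal g xs \<Longrightarrow> \<delta> (g 0) (g (length xs)) = wp xs"
proof (induction xs arbitrary: g)
  case Nil then show ?case unfolding gal_def by simp
next
  case (Cons s ys)
  have g: "g 0 \<in> Ch" "\<delta> (g 0) (g 1) = s" "gal (\<lambda>i. g (Suc i)) ys" using Cons.prems gal_Cons by auto
  have r: "red ys" using red_Cons Cons.prems by blast
  have IH: "\<delta> (g 1) (g (Suc (length ys))) = wp ys" using Cons.IH[OF r g(3)] by simp
  have s: "s \<in> S" and yS: "set ys \<subseteq> S" using Cons.prems unfolding red_def by auto
  have ch: "g 1 \<in> Ch" "g (Suc (length ys)) \<in> Ch" using g(3) unfolding gal_def by auto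
  have "l (s \<otimes> wp ys) = l (wp ys) + 1" using Cons.prems r unfolding red_def by simp
  then have "\<delta> (g 0) (g (Suc (length ys))) = s \<otimes> wp ys"
    using WD2b[OF ch(1) ch(2) g(1) s g(2)] IH by simp
  then show ?case by simp
qed

lemma LemE: "set xs \<subseteq> S \<Longrightarrow> C \<in> Ch \<Longrightarrow> E \<in> Ch \<Longrightarrow> \<delta> C E = wp xs \<Longrightarrow>
   \<exists>g. gal g xs \<and> g 0 = C \<and> g (length xs) = E"
proof (induction xs arbitrary: C)
  case Nil
  then have "C = E" using d1 by simp
  then show ?case using Nil unfolding gal_def by (intro exI[of _ "\<lambda>_. C"]) simp
next
  case (Cons s ys)
  have s: "s \<in> S" and yS: "set ys \<subseteq> S" using Cons.prems by auto
  obtain P where P: "P \<in> Ch" "\<delta> P C = s" "\<delta> P E = s \<otimes> \<delta> C E" using WD3[OF Cons.prems(2,3) s] by blast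
  have "\<delta> P E = wp ys" using P(3) Cons.prems(4) s yS wp_in by (simp add: ss_cancel)
  then obtain h where h: "gal h ys" "h 0 = P" "h (length ys) = E" using Cons.IH[OF yS P(1) Cons.prems(3)] by blast
  have CP: "\<delta> C P = s" using sym_adj[OF P(1) Cons.prems(2) s P(2)] .
  let ?g = "\<lambda>i. if i = 0 then C else h (i - 1)"
  have "gal ?g (s # ys)" unfolding gal_Cons using h CP Cons.prems(2) by simp
  then show ?case using h by (intro exI[of _ ?g]) simp
qed

lemma LemU: "red xs \<Longrightarrow> gal g xs \<Longrightarrow> gal h xs \<Longrightarrow> g 0 = h 0 \<Longrightarrow> g (length xs) = h (length xs) \<Longrightarrow>
   \<forall>i \<le> length xs. g i = h i"
proof (induction xs arbitrary: g h)
  case Nil then show ?case by simp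
next
  case (Cons s ys)
  have g: "g 0 \<in> Ch" "\<delta> (g 0) (g 1) = s" "gal (\<lambda>i. g (Suc i)) ys" using Cons.prems gal_Cons by auto
  have h: "h 0 \<in> Ch" "\<delta> (h 0) (h 1) = s" "gal (\<lambda>i. h (Suc i)) ys" using Cons.prems gal_Cons by auto
  have r: "red ys" using red_Cons Cons.prems by blast
  have s: "s \<in> S" and yS: "set ys \<subseteq> S" using Cons.prems unfolding red_def by auto
  have ch: "g 1 \<in> Ch" "h 1 \<in> Ch" "g (Suc (length ys)) \<in> Ch" using g(3) h(3) unfolding gal_def by auto
  have Rg: "\<delta> (g 1) (g (Suc (length ys))) = wp ys" using LemR[OF r g(3)] by simp
  have Rh: "\<delta> (h 1) (g (Suc (length ys))) = wp ys" using LemR[OF r h(3)] Cons.prems(5) by simp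
  have g1: "g 1 = h 1"
  proof (rule ccontr)
    assume ne: "g 1 \<noteq> h 1"
    have a: "\<delta> (g 1) (g 0) = s" using sym_adj[OF g(1) ch(1) s g(2)] .
    have b: "\<delta> (h 1) (g 0) = s" using sym_adj[OF h(1) ch(2) s h(2)] Cons.prems(4) by simp
    have gh: "\<delta> (g 1) (h 1) = s" using panel_adj[OF ch(1) ch(2) g(1) s a b ne] .
    have "l (s \<otimes> wp ys) = l (wp ys) + 1" using Cons.prems r unfolding red_def by simp
    then have "\<delta> (g 1) (g (Suc (length ys))) = s \<otimes> wp ys"
      using WD2b[OF ch(2) ch(3) ch(1) s gh] Rh by simp
    then have "s \<otimes> wp ys = wp ys" using Rg by simp
    then show False using S_ne1[OF s] wp_in[OF yS] s by simp
  qed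
  have "\<forall>i \<le> length ys. g (Suc i) = h (Suc i)"
    using Cons.IH[OF r g(3) h(3)] g1 Cons.prems(5) by simp
  then show ?case using Cons.prems(4) by (simp add: all_le_Suc)
qed

lemma gal_append: "gal g (xs @ ys) \<longleftrightarrow> gal g xs \<and> gal (\<lambda>i. g (length xs + i)) ys"
proof (induction xs arbitrary: g)
  case Nil then show ?case unfolding gal_def by auto
next
  case (Cons s xs)
  show ?case using Cons.IH[of "\<lambda>i. g (Suc i)"] by (simp add: gal_Cons)
qed

lemma gal_concat: assumes "gal g xs" "gal h ys" "g (length xs) = h 0"
  shows "gal (\<lambda>i. if i \<le> length xs then g i else h (i - length xs)) (xs @ ys)"
proof -
  let ?k = "\<lambda>i. if i \<le> length xs then g i else h (i - length xs)"
  have 1: "gal ?k xs" using assms(1) unfolding gal_def by auto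
  have "(\<lambda>i. ?k (length xs + i)) = h" using assms(3) by (auto simp: fun_eq_iff)
  then show ?thesis using 1 assms(2) gal_append by simp
qed

lemma gal_split: assumes r: "red (as @ bs)" and g: "gal g (as @ bs)"
  shows "\<delta> (g 0) (g (length as)) = wp as" "\<delta> (g (length as)) (g (length as + length bs)) = wp bs"
proof -
  have ga: "gal g as" "gal (\<lambda>i. g (length as + i)) bs" using g gal_append by auto
  show "\<delta> (g 0) (g (length as)) = wp as" using LemR[OF red_append(1)[OF r] ga(1)] .
  show "\<delta> (g (length as)) (g (length as + length bs)) = wp bs" using LemR[OF red_append(2)[OF r] ga(2)] by simp
qed

lemma mid_exists: assumes r: "red (as @ bs)" and D: "D \<in> Ch" and E: "E \<in> Ch" and e: "\<delta> D E = wp (as @ bs)"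
  shows "\<exists>P\<in>Ch. \<delta> D P = wp as \<and> \<delta> P E = wp bs"
proof -
  have S: "set (as @ bs) \<subseteq> S" using r unfolding red_def by simp
  obtain g where g: "gal g (as @ bs)" "g 0 = D" "g (length (as @ bs)) = E" using LemE[OF S D E e] by blast
  have "g (length as) \<in> Ch" using g(1) unfolding gal_def by simp
  then show ?thesis using gal_split[OF r g(1)] g by auto
qed

lemma mid_unique: assumes r: "red (as @ bs)" and D: "D \<in> Ch" and E: "E \<in> Ch"
  and P: "P \<in> Ch" "\<delta> D P = wp as" "\<delta> P E = wp bs" and Q: "Q \<in> Ch" "\<delta> D Q = wp as" "\<delta> Q E = wp bs"
  shows "P = Q"
proof -
  have aS: "set as \<subseteq> S" and bS: "set bs \<subseteq> S" using r unfolding red_def by auto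
  obtain g1 where g1: "gal g1 as" "g1 0 = D" "g1 (length as) = P" using LemE[OF aS D P(1) P(2)] by blast
  obtain h1 where h1: "gal h1 bs" "h1 0 = P" "h1 (length bs) = E" using LemE[OF bS P(1) E P(3)] by blast
  obtain g2 where g2: "gal g2 as" "g2 0 = D" "g2 (length as) = Q" using LemE[OF aS D Q(1) Q(2)] by blast
  obtain h2 where h2: "gal h2 bs" "h2 0 = Q" "h2 (length bs) = E" using LemE[OF bS Q(1) E Q(3)] by blast
  let ?k1 = "\<lambda>i. if i \<le> length as then g1 i else h1 (i - length as)"
  let ?k2 = "\<lambda>i. if i \<le> length as then g2 i else h2 (i - length as)"
  have k1: "gal ?k1 (as @ bs)" using gal_concat[OF g1(1) h1(1)] g1 h1 by simp
  have k2: "gal ?k2 (as @ bs)" using gal_concat[OF g2(1) h2(1)] g2 h2 by simp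
  have "\<forall>i \<le> length (as @ bs). ?k1 i = ?k2 i"
    by (rule LemU[OF r k1 k2]) (use g1 g2 h1 h2 in \<open>auto\<close>)
  then have "?k1 (length as) = ?k2 (length as)" by (metis le_add1 length_append)
  then show ?thesis using g1 g2 by simp
qed

end

locale apt = bld + fixes D E w0
  assumes D: "D \<in> Ch" and E: "E \<in> Ch" and w0: "w0 \<in> carrier G"
    and mx: "\<forall>w\<in>carrier G. l w \<le> l w0" and DE: "\<delta> D E = w0"
begin

definition \<alpha> where "\<alpha> x = (THE P. P \<in> Ch \<and> \<delta> D P = x \<and> \<delta> P E = inv x \<otimes> w0)"

lemma red_word: assumes "set as \<subseteq> S" "set bs \<subseteq> S" "length as = l (wp as)" "length bs = l (wp bs)"
  "l (wp as) + l (wp bs) = l (wp as \<otimes> wp bs)" shows "red (as @ bs)"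
  using assms wp_append[of as bs] unfolding red_def by simp

lemma alpha_ex: assumes x: "x \<in> carrier G"
  shows "\<exists>!P. P \<in> Ch \<and> \<delta> D P = x \<and> \<delta> P E = inv x \<otimes> w0"
proof -
  let ?y = "inv x \<otimes> w0"
  have y: "?y \<in> carrier G" using x w0 by simp
  obtain as where as: "set as \<subseteq> S" "wp as = x" "length as = l x" using l_word[OF x] by blast
  obtain bs where bs: "set bs \<subseteq> S" "wp bs = ?y" "length bs = l ?y" using l_word[OF y] by blast
  have xy: "x \<otimes> ?y = w0" using x w0 by simp
  have r: "red (as @ bs)" using red_word[OF as(1) bs(1)] as bs prefix_w0[OF w0 mx x] xy by simp
  have e: "\<delta> D E = wp (as @ bs)" using DE wp_append[OF as(1) bs(1)] as bs xy by simp
  obtain P where P: "P \<in> Ch" "\<delta> D P = wp as" "\<delta> P E = wp bs" using mid_exists[OF r D E e] by blast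
  show ?thesis
  proof (rule ex1I[of _ P])
    show "P \<in> Ch \<and> \<delta> D P = x \<and> \<delta> P E = inv x \<otimes> w0" using P as bs by simp
  next
    fix Q assume "Q \<in> Ch \<and> \<delta> D Q = x \<and> \<delta> Q E = inv x \<otimes> w0"
    then show "Q = P" using mid_unique[OF r D E _ _ _ P] as bs by auto
  qed
qed

lemma alpha_prop: assumes x: "x \<in> carrier G"
  shows "\<alpha> x \<in> Ch" "\<delta> D (\<alpha> x) = x" "\<delta> (\<alpha> x) E = inv x \<otimes> w0"
  using theI'[OF alpha_ex[OF x]] unfolding \<alpha>_def by auto

lemma alpha_eq: assumes x: "x \<in> carrier G" and P: "P \<in> Ch" "\<delta> D P = x" "\<delta> P E = inv x \<otimes> w0"
  shows "\<alpha> x = P"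
  using alpha_ex[OF x] alpha_prop[OF x] P by blast

lemma adj_up: assumes x: "x \<in> carrier G" and t: "t \<in> S" and up: "l (x \<otimes> t) = l x + 1"
  shows "\<delta> (\<alpha> x) (\<alpha> (x \<otimes> t)) = t"
proof -
  let ?x' = "x \<otimes> t"
  have x': "?x' \<in> carrier G" using x t by simp
  let ?y = "inv ?x' \<otimes> w0"
  have y: "?y \<in> carrier G" using x' w0 by simp
  obtain as where as: "set as \<subseteq> S" "wp as = x" "length as = l x" using l_word[OF x] by blast
  obtain bs where bs: "set bs \<subseteq> S" "wp bs = ?y" "length bs = l ?y" using l_word[OF y] by blast
  have aS: "set (as @ [t]) \<subseteq> S" using as t by simp
  have wa: "wp (as @ [t]) = ?x'" using wp_append[of as "[t]"] as t by simp
  have xy: "?x' \<otimes> ?y = w0" using x' w0 by simp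
  have r: "red ((as @ [t]) @ bs)" using red_word[OF aS bs(1)] wa as bs up prefix_w0[OF w0 mx x'] xy by simp
  have S: "set ((as @ [t]) @ bs) \<subseteq> S" using aS bs by simp
  have e: "\<delta> D E = wp ((as @ [t]) @ bs)" using DE wp_append[OF aS bs(1)] wa bs xy by simp
  obtain g where g: "gal g ((as @ [t]) @ bs)" "g 0 = D" "g (length ((as @ [t]) @ bs)) = E"
    using LemE[OF S D E e] by blast
  have r2: "red (as @ ([t] @ bs))" using r by simp
  have g2: "gal g (as @ ([t] @ bs))" using g(1) by simp
  have ch: "g (length as) \<in> Ch" "g (Suc (length as)) \<in> Ch" using g(1) unfolding gal_def by auto
  have tt: "\<delta> (g (length as)) (g (Suc (length as))) = t" using g(1) unfolding gal_def by (auto simp: nth_append)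
  have s1: "\<delta> D (g (length as)) = x" "\<delta> (g (length as)) E = wp ([t] @ bs)"
    using gal_split[OF r2 g2] g as by auto
  have "wp ([t] @ bs) = t \<otimes> ?y" using t bs by simp
  also have "\<dots> = inv x \<otimes> w0" using x t w0 by (simp add: inv_mult_group S_invs m_assoc[symmetric] S_inv)
  finally have a1: "\<alpha> x = g (length as)" using alpha_eq[OF x ch(1) s1(1)] s1(2) by simp
  have s2: "\<delta> D (g (length (as @ [t]))) = ?x'" "\<delta> (g (length (as @ [t]))) E = wp bs"
    using gal_split[OF r g(1)] g wa by auto
  have a2: "\<alpha> ?x' = g (Suc (length as))" using alpha_eq[OF x' ch(2)] s2 bs by simp
  show ?thesis using a1 a2 tt by simp
qed

lemma adj: assumes x: "x \<in> carrier G" and t: "t \<in> S"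
  shows "\<delta> (\<alpha> x) (\<alpha> (x \<otimes> t)) = t"
proof (cases "l (x \<otimes> t) = l x + 1")
  case True then show ?thesis using adj_up[OF x t] by simp
next
  case False
  let ?x' = "x \<otimes> t"
  have x': "?x' \<in> carrier G" using x t by simp
  have e: "?x' \<otimes> t = x" using x t by (simp add: ss_cancel_r)
  have "l (?x' \<otimes> t) = l ?x' + 1" using False l_ws[OF t x] e by simp
  then have "\<delta> (\<alpha> ?x') (\<alpha> x) = t" using adj_up[OF x' t] e by simp
  then show ?thesis using sym_adj[OF alpha_prop(1)[OF x'] alpha_prop(1)[OF x] t] by simp
qed

lemma isom: assumes u: "u \<in> carrier G" and v: "v \<in> carrier G"
  shows "\<delta> (\<alpha> u) (\<alpha> v) = inv u \<otimes> v"
proof -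
  let ?z = "inv u \<otimes> v"
  have z: "?z \<in> carrier G" using u v by simp
  obtain zs where zs: "set zs \<subseteq> S" "wp zs = ?z" "length zs = l ?z" using l_word[OF z] by blast
  have r: "red zs" using zs unfolding red_def by simp
  let ?g = "\<lambda>i. \<alpha> (u \<otimes> wp (take i zs))"
  have tS: "set (take i zs) \<subseteq> S" for i using zs(1) set_take_subset[of i zs] by auto
  have gal: "gal ?g zs" unfolding gal_def
  proof (intro conjI allI impI)
    fix i show "?g i \<in> Ch" using alpha_prop(1) u wp_in[OF tS] by simp
  next
    fix i assume i: "i < length zs"
    have zi: "zs ! i \<in> S" using zs(1) i by auto
    have "wp (take (Suc i) zs) = wp (take i zs) \<otimes> zs ! i"
      using wp_append[OF tS, of "[zs ! i]"] zi i by (simp add: take_Suc_conv_app_nth)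
    then have "u \<otimes> wp (take (Suc i) zs) = (u \<otimes> wp (take i zs)) \<otimes> zs ! i"
      using u wp_in[OF tS] zi by (simp add: m_assoc)
    then show "\<delta> (?g i) (?g (Suc i)) = zs ! i" using adj[of "u \<otimes> wp (take i zs)" "zs ! i"] u wp_in[OF tS] zi by simp
  qed
  have "\<delta> (?g 0) (?g (length zs)) = ?z" using LemR[OF r gal] zs by simp
  then show ?thesis using u v zs by simp
qed


end

locale walk = apt + assumes thick: "infinitely_thick S Ch \<delta>" and fin: "finite (carrier G)"
begin

lemma step: assumes C: "C \<in> Ch" and s: "s \<in> S"
  shows "\<exists>C'\<in>Ch. \<forall>x\<in>carrier G. \<delta> C' (\<alpha> x) =
     (if l (s \<otimes> \<delta> C (\<alpha> x)) = l (\<delta> C (\<alpha> x)) + 1 then s \<otimes> \<delta> C (\<alpha> x) else \<delta> C (\<alpha> x))"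
proof -
  let ?P = "{Q \<in> Ch. \<delta> C Q = s}"
  have "infinite (panel S Ch \<delta> C s)" using thick C s unfolding infinitely_thick_def by blast
  then have infP: "infinite ?P" unfolding panel_def by simp
  let ?f = "\<lambda>x. \<delta> C (\<alpha> x)"
  let ?B = "\<lambda>x. {Q \<in> ?P. \<delta> Q (\<alpha> x) = s \<otimes> ?f x \<and> l (s \<otimes> ?f x) + 1 = l (?f x)}"
  have sub: "\<forall>Q1\<in>?B x. \<forall>Q2\<in>?B x. Q1 = Q2" if x: "x \<in> carrier G" for x
  proof (intro ballI, rule ccontr)
    fix Q1 Q2 assume q1: "Q1 \<in> ?B x" and q2: "Q2 \<in> ?B x" and ne: "Q1 \<noteq> Q2"
    have ax: "\<alpha> x \<in> Ch" using alpha_prop(1)[OF x] .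
    have fx: "?f x \<in> carrier G" using dC[OF C ax] .
    have c: "Q1 \<in> Ch" "Q2 \<in> Ch" using q1 q2 by auto
    have a: "\<delta> Q1 C = s" "\<delta> Q2 C = s" using sym_adj[OF C c(1) s] sym_adj[OF C c(2) s] q1 q2 by auto
    have adj12: "\<delta> Q1 Q2 = s" using panel_adj[OF c(1) c(2) C s a ne] .
    let ?u = "s \<otimes> ?f x"
    have "l (s \<otimes> ?u) = l ?u + 1" using q1 fx s by (simp add: ss_cancel)
    then have "\<delta> Q1 (\<alpha> x) = s \<otimes> ?u" using WD2b[OF c(2) ax c(1) s adj12] q2 by simp
    then have "?u = s \<otimes> ?u" using q1 by simp
    then show False using S_ne1[OF s] fx s by simp
  qed
  have finB: "finite (?B x)" if "x \<in> carrier G" for x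
  proof (cases "?B x = {}")
    case True then show ?thesis by (simp only: finite.emptyI)
  next
    case False then obtain Q where "Q \<in> ?B x" by blast
    then have "?B x = {Q}" using sub[OF that] by blast
    then show ?thesis by simp
  qed
  have "finite (\<Union>x\<in>carrier G. ?B x)" by (rule finite_UN_I[OF fin finB])
  then have "infinite (?P - (\<Union>x\<in>carrier G. ?B x))" using infP by (rule Diff_infinite_finite)
  then have "?P - (\<Union>x\<in>carrier G. ?B x) \<noteq> {}" by (rule infinite_imp_nonempty)
  then obtain Q where Q: "Q \<in> ?P" "Q \<notin> (\<Union>x\<in>carrier G. ?B x)" by blast
  have Qc: "Q \<in> Ch" using Q by simp
  have QC: "\<delta> Q C = s" using sym_adj[OF C Qc s] Q by simp
  show ?thesis
  proof (intro bexI[OF _ Qc] ballI)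
    fix x assume x: "x \<in> carrier G"
    have ax: "\<alpha> x \<in> Ch" using alpha_prop(1)[OF x] .
    have fx: "?f x \<in> carrier G" using dC[OF C ax] .
    show "\<delta> Q (\<alpha> x) = (if l (s \<otimes> ?f x) = l (?f x) + 1 then s \<otimes> ?f x else ?f x)"
    proof (cases "l (s \<otimes> ?f x) = l (?f x) + 1")
      case True then show ?thesis using WD2b[OF C ax Qc s QC] by simp
    next
      case False
      then have dn: "l (s \<otimes> ?f x) + 1 = l (?f x)" using l_sw[OF s fx] by simp
      have "\<delta> Q (\<alpha> x) \<noteq> s \<otimes> ?f x" using Q x dn by blast
      then show ?thesis using WD2a[OF C ax Qc s QC] False by simp
    qed
  qed
qed

lemma walk: "\<forall>C\<in>Ch. (\<Sum>x\<in>carrier G. l w0 - l (\<delta> C (\<alpha> x))) = n \<longrightarrow>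
   (\<exists>C'\<in>Ch. \<forall>x\<in>carrier G. l (\<delta> C' (\<alpha> x)) = l w0)"
proof (induction n rule: less_induct)
  case (less n)
  show ?case
  proof (intro ballI impI)
    fix C assume C: "C \<in> Ch" and sn: "(\<Sum>x\<in>carrier G. l w0 - l (\<delta> C (\<alpha> x))) = n"
    let ?f = "\<lambda>x. \<delta> C (\<alpha> x)"
    have fx: "?f x \<in> carrier G" if "x \<in> carrier G" for x using dC[OF C alpha_prop(1)[OF that]] .
    show "\<exists>C'\<in>Ch. \<forall>x\<in>carrier G. l (\<delta> C' (\<alpha> x)) = l w0"
    proof (cases "\<forall>x\<in>carrier G. l (?f x) = l w0")
      case True then show ?thesis using C by blast
    next
      case False
      then obtain x0 where x0: "x0 \<in> carrier G" "l (?f x0) \<noteq> l w0" by blast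
      then have lt: "l (?f x0) < l w0" using mx fx[OF x0(1)] by (meson le_neq_implies_less)
      obtain s where s: "s \<in> S" "l (s \<otimes> ?f x0) = l (?f x0) + 1" using ascent[OF w0 mx fx[OF x0(1)] lt] by blast
      obtain C' where C': "C' \<in> Ch" "\<forall>x\<in>carrier G. \<delta> C' (\<alpha> x) =
        (if l (s \<otimes> ?f x) = l (?f x) + 1 then s \<otimes> ?f x else ?f x)" using step[OF C s(1)] by blast
      have mono: "l w0 - l (\<delta> C' (\<alpha> x)) \<le> l w0 - l (?f x)" if x: "x \<in> carrier G" for x
        using C'(2) x by auto
      have strict: "l w0 - l (\<delta> C' (\<alpha> x0)) < l w0 - l (?f x0)"
        using C'(2) x0(1) s(2) lt by simp
      have "(\<Sum>x\<in>carrier G. l w0 - l (\<delta> C' (\<alpha> x))) < n"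
        using sum_strict_mono_ex1[OF fin, of "\<lambda>x. l w0 - l (\<delta> C' (\<alpha> x))" "\<lambda>x. l w0 - l (?f x)"]
          mono strict x0(1) sn by blast
      then show ?thesis using less.IH C'(1) by blast
    qed
  qed
qed

lemma final: "\<exists>C\<in>Ch. \<exists>A. apartment G Ch \<delta> A \<and> opp_contains G S \<delta> C A"
proof -
  obtain C' where C': "C' \<in> Ch" "\<forall>x\<in>carrier G. l (\<delta> C' (\<alpha> x)) = l w0" using walk D by blast
  have "apartment G Ch \<delta> (\<alpha> ` carrier G)" unfolding apartment_def
    using alpha_prop(1) isom by (intro exI[of _ \<alpha>]) auto
  moreover have "opp_contains G S \<delta> C' (\<alpha> ` carrier G)"
    unfolding opp_contains_def opposite_def using C'(2) mx by auto
  ultimately show ?thesis using C' by blast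
qed

end

lemma (in bld) W3: "set xs \<subseteq> S \<Longrightarrow> E \<in> Ch \<Longrightarrow> \<exists>P\<in>Ch. \<delta> P E = wp xs"
proof (induction xs)
  case Nil then show ?case using dCC by (intro bexI[of _ E]) auto
next
  case (Cons s ys)
  then obtain Q where Q: "Q \<in> Ch" "\<delta> Q E = wp ys" by auto
  have s: "s \<in> S" using Cons.prems by simp
  obtain P where "P \<in> Ch" "\<delta> P Q = s" "\<delta> P E = s \<otimes> \<delta> Q E" using WD3[OF Q(1) Cons.prems(2) s] by blast
  then show ?case using Q by auto
qed

theorem lemma4p13:
  fixes G :: "('w, 'm) monoid_scheme" and S :: "'w set"
    and Ch :: "'c set" and \<delta> :: "'c \<Rightarrow> 'c \<Rightarrow> 'w"
  assumes "spherical_building G S Ch \<delta>"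
    and "Ch \<noteq> {}"
    and "infinitely_thick S Ch \<delta>"
  shows "\<exists>C\<in>Ch. \<exists>A. apartment G Ch \<delta> A \<and> opp_contains G S \<delta> C A"
proof -
  have wb: "w_building G S Ch \<delta>" and fin: "finite (carrier G)"
    using assms(1) unfolding spherical_building_def by auto
  have cs: "coxeter_system G S" using wb unfolding w_building_def by auto
  have grp: "group G" using cs unfolding coxeter_system_def by auto
  have cx: "coxsys G S" by (intro coxsys.intro grp coxsys_axioms.intro cs)
  have bl: "bld G S Ch \<delta>" by (intro bld.intro cx bld_axioms.intro wb)
  obtain E where E: "E \<in> Ch" using assms(2) by blast
  let ?L = "cox_len G S ` carrier G"
  have fL: "finite ?L" using fin by simp
  have neL: "?L \<noteq> {}" using monoid.one_closed[OF group.is_monoid[OF grp]] by blast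
  obtain w0 where w0: "w0 \<in> carrier G" "cox_len G S w0 = Max ?L" using Max_in[OF fL neL] by auto
  have mx: "\<forall>w\<in>carrier G. cox_len G S w \<le> cox_len G S w0" using w0(2) Max_ge[OF fL] by simp
  obtain xs where xs: "set xs \<subseteq> S" "wprod G xs = w0" using coxsys.has_word[OF cx w0(1)] by blast
  obtain D where D: "D \<in> Ch" "\<delta> D E = w0" using bld.W3[OF bl xs(1) E] xs(2) by blast
  have "walk G S Ch \<delta> D E w0"
    by (intro walk.intro apt.intro bl apt_axioms.intro walk_axioms.intro D E w0 mx assms(3) fin)
  then show ?thesis by (rule walk.final)
qed


end
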